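(* Consider the Lazy Trajectory Optimization (LTO) planner on a configuration space $\mathcal{X}$ normalized to $[0,1]^d$, $d\in\mathbb{N}$, which is partitioned into a uniform grid of $K^d$ voxels ($K$ intervals along each axis), with one graph vertex per voxel, and in which two vertices are joined by an edge if the $\ell_\infty$ distance between the centers of their voxels is at most $r$, where $r=i/K$ for some $i\in\{0,1,\dots,K\}$. Then the TO-aware time complexity of LTO, i.e. the number of trajectory-optimization (TO) problems it solves, is $O\big((2i+1)^d K^d\big)$.
   Context: LTO is a graph-search planner (a variant of lazy weighted A* ) over an a priori unknown graph $\mathcal{G}=(V,E)$. Each vertex represents a robot state and each edge a robot trajectory between two vertex states. The true configuration of a vertex is obtained by solving a short-horizon trajectory optimization problem (a mixed-integer convex program) restricted to that vertex's voxel, and the true trajectory of an edge is obtained by solving a trajectory optimization problem restricted to the hypercube of voxels spanned by the two endpoint voxels. LTO solves a TO problem for a vertex or an edge only when it needs it, and reuses the result if the same vertex configuration or the same configuration pair has already been solved, so each vertex and each edge requires at most one TO solve. The "TO-aware time complexity" measures running time by the number of TO problems solved. *)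

theory Defs
  imports Main "HOL.Real"
begin

text \<open>Voxels of the uniform grid on [0,1]^d with K intervals per axis:
  integer index vectors (j_1,...,j_d) with 0 <= j_k < K.\<close>
type_synonym voxel = "nat list"

definition voxels :: "nat \<Rightarrow> nat \<Rightarrow> voxel set" where
  "voxels d K = {v. length v = d \<and> (\<forall>k<d. v ! k < K)}"

definition voxel_center :: "nat \<Rightarrow> voxel \<Rightarrow> nat \<Rightarrow> real" where
  "voxel_center K v k = (real (v ! k) + 1/2) / real K"

definition linf_center_dist :: "nat \<Rightarrow> nat \<Rightarrow> voxel \<Rightarrow> voxel \<Rightarrow> real" where
  "linf_center_dist d K u v =
     Max ({\<bar>voxel_center K u k - voxel_center K v k\<bar> | k. k < d} \<union> {0})"

definition lto_edges :: "nat \<Rightarrow> nat \<Rightarrow> real \<Rightarrow> voxel set set" where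
  "lto_edges d K r = {{u, v} | u v. u \<in> voxels d K \<and> v \<in> voxels d K \<and> u \<noteq> v
                                    \<and> linf_center_dist d K u v \<le> r}"

datatype to_problem = Vertex_TO voxel | Edge_TO "voxel set"

definition lto_graph_problems :: "nat \<Rightarrow> nat \<Rightarrow> real \<Rightarrow> to_problem set" where
  "lto_graph_problems d K r = Vertex_TO ` voxels d K \<union> Edge_TO ` lto_edges d K r"

text \<open>Abstraction of an LTO run: the sequence of TO problems it solves. LTO only solves TO
  problems for vertices and edges of the graph, and by reuse of results each vertex and each
  edge is solved at most once (the list has no repetitions).\<close>
definition lto_TO_log :: "nat \<Rightarrow> nat \<Rightarrow> real \<Rightarrow> to_problem list \<Rightarrow> bool" where
  "lto_TO_log d K r log \<longleftrightarrow> distinct log \<and> set log \<subseteq> lto_graph_problems d K r"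

definition TO_aware_time :: "to_problem list \<Rightarrow> nat" where
  "TO_aware_time log = length log"

end

theory Submission
  imports Defs
begin

lemma voxels_eq: "voxels d K = {xs. set xs \<subseteq> {0..<K} \<and> length xs = d}"
  unfolding voxels_def by (auto simp: in_set_conv_nth subset_iff)

lemma voxels_finite: "finite (voxels d K)"
  unfolding voxels_eq by (rule finite_lists_length_eq) simp

lemma voxels_card: "card (voxels d K) = K ^ d"
  unfolding voxels_eq by (subst card_lists_length_eq) simp_all

lemma dist_bound:
  assumes "linf_center_dist d K u v \<le> real i / real K" "1 \<le> K" "k < d"
  shows "\<bar>int (u!k) - int (v!k)\<bar> \<le> int i"
proof -
  let ?S = "{\<bar>voxel_center K u k - voxel_center K v k\<bar> | k. k < d} \<union> {0}"
  have fin: "finite ?S"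
  proof -
    have "{\<bar>voxel_center K u k - voxel_center K v k\<bar> | k. k < d}
          = (\<lambda>k. \<bar>voxel_center K u k - voxel_center K v k\<bar>) ` {..<d}" by auto
    then show ?thesis by simp
  qed
  have "\<bar>voxel_center K u k - voxel_center K v k\<bar> \<le> Max ?S"
    using assms(3) by (intro Max_ge[OF fin]) auto
  then have "\<bar>voxel_center K u k - voxel_center K v k\<bar> \<le> real i / real K"
    using assms(1) unfolding linf_center_dist_def by linarith
  moreover have "voxel_center K u k - voxel_center K v k = (real (u!k) - real (v!k)) / real K"
    unfolding voxel_center_def by (simp add: add_divide_distrib diff_divide_distrib)
  ultimately have "\<bar>real (u!k) - real (v!k)\<bar> / real K \<le> real i / real K"
    by simp
  then have "\<bar>real (u!k) - real (v!k)\<bar> \<le> real i"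
    using assms(2) by (simp add: divide_le_cancel)
  then show ?thesis by linarith
qed

definition B :: "nat \<Rightarrow> nat \<Rightarrow> voxel \<Rightarrow> voxel set" where
  "B d i u = {v. length v = d \<and> (\<forall>k<d. \<bar>int (v!k) - int (u!k)\<bar> \<le> int i)}"

lemma B_card: "finite (B d i u) \<and> card (B d i u) \<le> (2*i+1)^d"
proof -
  define f where "f v = map (\<lambda>k. int (v!k) - int (u!k)) [0..<d]" for v
  define L where "L = {xs. set xs \<subseteq> {- int i..int i} \<and> length xs = d}"
  have finL: "finite L" unfolding L_def by (rule finite_lists_length_eq) simp
  have h: "nat (2 * int i + 1) = Suc (2*i)" by linarith
  have cardL: "card L = (2*i+1)^d" unfolding L_def
    by (subst card_lists_length_eq) (simp_all add: h)
  have inj: "inj_on f (B d i u)"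
  proof
    fix v w assume "v \<in> B d i u" "w \<in> B d i u" "f v = f w"
    then show "v = w" unfolding B_def f_def
      by (auto intro!: nth_equalityI dest!: map_eq_conv[THEN iffD1, rotated])
  qed
  have sub: "f ` B d i u \<subseteq> L"
    unfolding B_def L_def f_def by (auto simp: in_set_conv_nth abs_le_iff) (metis le_diff_eq minus_diff_eq neg_le_iff_le add.commute diff_add_cancel)
  have "finite (B d i u)" using inj_on_finite[OF inj sub finL] .
  moreover have "card (B d i u) \<le> card L"
    using card_inj_on_le[OF inj sub finL] .
  ultimately show ?thesis using cardL by simp
qed

theorem theorem1:
  "\<exists>C::real. \<forall>(d::nat) (K::nat) (i::nat) log.
      1 \<le> K \<longrightarrow> i \<le> K \<longrightarrow> lto_TO_log d K (real i / real K) log \<longrightarrow>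
      real (TO_aware_time log) \<le> C * real ((2 * i + 1) ^ d * K ^ d)"
proof (intro exI allI impI)
  fix d K i :: nat and log
  assume K: "1 \<le> K" and iK: "i \<le> K" and lg: "lto_TO_log d K (real i / real K) log"
  let ?V = "voxels d K"
  let ?E = "lto_edges d K (real i / real K)"
  let ?S = "SIGMA u:?V. B d i u"
  have Esub: "?E \<subseteq> (\<lambda>(u,v). {u,v}) ` ?S"
  proof
    fix e assume "e \<in> ?E"
    then obtain u v where e: "e = {u,v}" and uv: "u \<in> ?V" "v \<in> ?V"
      and dl: "linf_center_dist d K u v \<le> real i / real K"
      unfolding lto_edges_def by blast
    have "v \<in> B d i u" unfolding B_def
    proof (intro CollectI conjI allI impI)
      show "length v = d" using uv unfolding voxels_def by simp
      fix k assume "k < d"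
      from dist_bound[OF dl K this] show "\<bar>int (v!k) - int (u!k)\<bar> \<le> int i" by linarith
    qed
    then show "e \<in> (\<lambda>(u,v). {u,v}) ` ?S" using e uv by force
  qed
  have finS: "finite ?S" using voxels_finite B_card by blast
  have "card ?E \<le> card ?S"
    using le_trans[OF card_mono[OF finite_imageI[OF finS] Esub] card_image_le[OF finS]] .
  also have "card ?S = (\<Sum>u\<in>?V. card (B d i u))"
    using voxels_finite B_card by (simp add: card_SigmaI)
  also have "\<dots> \<le> card ?V * (2*i+1)^d"
    using sum_bounded_above[of ?V "\<lambda>u. card (B d i u)" "(2*i+1)^d"] B_card by simp
  finally have cE: "card ?E \<le> K^d * (2*i+1)^d" by (simp add: voxels_card)
  have finE: "finite ?E" using finite_subset[OF Esub finite_imageI[OF finS]] .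
  have finP: "finite (lto_graph_problems d K (real i / real K))"
    unfolding lto_graph_problems_def using voxels_finite finE by simp
  have "length log = card (set log)" using lg unfolding lto_TO_log_def
    by (simp add: distinct_card)
  also have "\<dots> \<le> card (lto_graph_problems d K (real i / real K))"
    using lg finP unfolding lto_TO_log_def by (simp add: card_mono)
  also have "\<dots> \<le> card (Vertex_TO ` ?V) + card (Edge_TO ` ?E)"
    unfolding lto_graph_problems_def by (rule card_Un_le)
  also have "\<dots> \<le> card ?V + card ?E"
    using card_image_le[OF voxels_finite] card_image_le[OF finE] add_mono by blast
  also have "\<dots> \<le> K^d + K^d * (2*i+1)^d" using cE by (simp add: voxels_card)
  also have "\<dots> \<le> 2 * ((2*i+1)^d * K^d)"
  proof -
    have "1 \<le> (2*i+1)^d" by simp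
    then have "K^d \<le> K^d * (2*i+1)^d" by simp
    then show ?thesis by simp
  qed
  finally have "length log \<le> 2 * ((2*i+1)^d * K^d)" .
  then show "real (TO_aware_time log) \<le> 2 * real ((2 * i + 1) ^ d * K ^ d)"
    unfolding TO_aware_time_def by (metis of_nat_le_iff of_nat_mult of_nat_numeral)
qed

end
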